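(* Let $\Phi\colon\mathcal{M}(2;\mathbb{C})\to\mathcal{M}(2;\mathbb{C})$ be a polynomial automorphism compatible with conjugation. Then the discriminant hypersurface $\Delta=\{\mathrm{M}\in\mathcal{M}(2;\mathbb{C}):4\det\mathrm{M}-(\mathrm{tr}\,\mathrm{M})^2=0\}$ is invariant by $\Phi$; consequently the conic $v=u^2/4$ is invariant by $\mathrm{Sq}\,\Phi$.
   Context: $\mathrm{Inv}\colon\mathcal{M}(2;\mathbb{C})\to\mathbb{C}^2$, $\mathrm{M}\mapsto(\mathrm{tr}\,\mathrm{M},\det\mathrm{M})$. For $\Phi$ compatible with conjugation (i.e. $\mathrm{A}\Phi(\mathrm{M})\mathrm{A}^{-1}=\Phi(\mathrm{A}\mathrm{M}\mathrm{A}^{-1})$ for all $\mathrm{A}\in\mathrm{GL}(2;\mathbb{C})$), $\mathrm{Sq}\,\Phi\colon\mathbb{C}^2\dashrightarrow\mathbb{C}^2$ is the rational map, in coordinates $(u,v)$, with $\mathrm{Inv}\circ\Phi=\mathrm{Sq}\,\Phi\circ\mathrm{Inv}$. *)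

theory Defs
  imports "HOL-Analysis.Analysis"
begin

type_synonym mat2 = "complex^2^2"

definition tr2 :: "mat2 \<Rightarrow> complex" where
  "tr2 M = M $ 1 $ 1 + M $ 2 $ 2"

definition Inv :: "mat2 \<Rightarrow> complex \<times> complex" where
  "Inv M = (tr2 M, det M)"

definition poly_fun_mat2 :: "(mat2 \<Rightarrow> complex) \<Rightarrow> bool" where
  "poly_fun_mat2 f \<longleftrightarrow>
     (\<exists>(c :: nat \<Rightarrow> nat \<Rightarrow> nat \<Rightarrow> nat \<Rightarrow> complex) (N :: nat).
        \<forall>M. f M = (\<Sum>i\<le>N. \<Sum>j\<le>N. \<Sum>k\<le>N. \<Sum>l\<le>N.
                      c i j k l * (M $ 1 $ 1) ^ i * (M $ 1 $ 2) ^ j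
                                * (M $ 2 $ 1) ^ k * (M $ 2 $ 2) ^ l))"

definition poly_map_mat2 :: "(mat2 \<Rightarrow> mat2) \<Rightarrow> bool" where
  "poly_map_mat2 F \<longleftrightarrow> (\<forall>i j. poly_fun_mat2 (\<lambda>M. F M $ i $ j))"

definition poly_automorphism_mat2 :: "(mat2 \<Rightarrow> mat2) \<Rightarrow> bool" where
  "poly_automorphism_mat2 F \<longleftrightarrow>
     (\<exists>G. poly_map_mat2 F \<and> poly_map_mat2 G \<and> (\<forall>M. G (F M) = M) \<and> (\<forall>M. F (G M) = M))"

definition compatible_with_conjugation :: "(mat2 \<Rightarrow> mat2) \<Rightarrow> bool" where
  "compatible_with_conjugation F \<longleftrightarrow>
     (\<forall>A M. invertible A \<longrightarrow>
        A ** F M ** matrix_inv A = F (A ** M ** matrix_inv A))"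

definition discriminant_hypersurface :: "mat2 set" where
  "discriminant_hypersurface = {M. 4 * det M - (tr2 M)^2 = 0}"

definition discriminant_conic :: "(complex \<times> complex) set" where
  "discriminant_conic = {(u, v). v = u^2 / 4}"

end

theory Submission
  imports Defs
begin

lemma minv: assumes "invertible (A::mat2)"
  shows "A ** matrix_inv A = mat 1 \<and> matrix_inv A ** A = mat 1"
  using assms unfolding invertible_def matrix_inv_def by (rule someI_ex)

lemma mult2: "((A::mat2) ** B) $ i $ j = A$i$1*B$1$j + A$i$2*B$2$j"
  by (simp add: matrix_matrix_mult_def sum_2)

lemma mat2_eq: "(A::mat2) = B \<longleftrightarrow> A$1$1 = B$1$1 \<and> A$1$2 = B$1$2 \<and> A$2$1 = B$2$1 \<and> A$2$2 = B$2$2"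
  by (auto simp: vec_eq_iff forall_2)

lemma comm_of_compat:
  assumes F: "compatible_with_conjugation F" and A: "invertible A" and c: "A ** M = M ** A"
  shows "A ** F M = F M ** A"
proof -
  have i: "A ** matrix_inv A = mat 1" "matrix_inv A ** A = mat 1" using minv[OF A] by auto
  have "A ** M ** matrix_inv A = M" using c i by (metis matrix_mul_assoc matrix_mul_rid)
  hence e: "A ** F M ** matrix_inv A = F M" using F A unfolding compatible_with_conjugation_def by metis
  have "F M ** A = A ** F M ** (matrix_inv A ** A)" by (metis e matrix_mul_assoc)
  thus ?thesis using i by (simp add: matrix_mul_rid)
qed

lemma alg:
  fixes e q r d x y :: complex
  assumes E1: "y * r = q * x" and E2: "q * d = y * e" and E3: "x * e = r * d"
    and H: "e^2 + 4*q*r = 0" and ns: "e \<noteq> 0 \<or> q \<noteq> 0 \<or> r \<noteq> 0"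
  shows "d^2 + 4*y*x = 0"
proof -
  have "e^2 * (d^2 + 4*y*x) = d^2*(e^2+4*q*r) + 4*((y*e)*(x*e) - (q*d)*(r*d))"
    by (simp add: algebra_simps power2_eq_square)
  hence a: "e^2 * (d^2 + 4*y*x) = 0" using E2 E3 H by simp
  have "q^2 * (d^2 + 4*y*x) = (q*d)^2 + 4*q*y*(q*x)" by (simp add: algebra_simps power2_eq_square)
  also have "\<dots> = y^2*(e^2 + 4*q*r)" using E1 E2 by (simp add: algebra_simps power2_eq_square)
  finally have b: "q^2 * (d^2 + 4*y*x) = 0" using H by simp
  have "r^2 * (d^2 + 4*y*x) = (r*d)^2 + 4*r*x*(r*y)" by (simp add: algebra_simps power2_eq_square)
  also have "\<dots> = x^2*(e^2 + 4*q*r)" using E1 E3 by (simp add: algebra_simps power2_eq_square)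
  finally have c: "r^2 * (d^2 + 4*y*x) = 0" using H by simp
  show ?thesis using a b c ns by auto
qed

lemma disc_pres:
  assumes F: "compatible_with_conjugation F" and M: "M \<in> discriminant_hypersurface"
  shows "F M \<in> discriminant_hypersurface"
proof -
  define X where "X = F M"
  define p where "p = M$1$1"
  define q where "q = M$1$2"
  define r where "r = M$2$1"
  define s where "s = M$2$2"
  have H: "(p-s)^2 + 4*q*r = 0" using M
    by (simp add: discriminant_hypersurface_def det_2 tr2_def p_def q_def r_def s_def algebra_simps power2_eq_square)
  show ?thesis
  proof (cases "p - s = 0 \<and> q = 0 \<and> r = 0")
    case True
    define A1 :: mat2 where "A1 = (\<chi> i j. if i = 1 \<and> j = 2 then 1 else if i = j then 1 else 0)"
    define A2 :: mat2 where "A2 = (\<chi> i j. if i = 2 \<and> j = 1 then 1 else if i = j then 1 else 0)"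
    have d1: "det A1 = 1" by (simp add: A1_def det_2)
    have d2: "det A2 = 1" by (simp add: A2_def det_2)
    have c1: "A1 ** M = M ** A1" using True
      by (simp add: mat2_eq mult2 A1_def p_def q_def r_def s_def)
    have c2: "A2 ** M = M ** A2" using True
      by (simp add: mat2_eq mult2 A2_def p_def q_def r_def s_def)
    have x1: "A1 ** X = X ** A1" unfolding X_def
      by (rule comm_of_compat[OF F _ c1]) (simp add: invertible_det_nz d1)
    have x2: "A2 ** X = X ** A2" unfolding X_def
      by (rule comm_of_compat[OF F _ c2]) (simp add: invertible_det_nz d2)
    have "X$2$1 = 0 \<and> X$1$1 = X$2$2 \<and> X$1$2 = 0"
      using x1 x2 by (simp add: mat2_eq mult2 A1_def A2_def)
    thus ?thesis unfolding X_def[symmetric]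
      by (simp add: discriminant_hypersurface_def det_2 tr2_def algebra_simps power2_eq_square)
  next
    case False
    define f where "f c = (p+c)*(s+c) - q*r" for c :: complex
    have "\<exists>c. f c \<noteq> 0"
    proof (rule ccontr)
      assume "\<not> ?thesis"
      hence "f 0 = 0" "f 1 = 0" "f 2 = 0" by auto
      hence "f 2 - 2 * f 1 + f 0 = 0" by simp
      moreover have "f 2 - 2 * f 1 + f 0 = 2" by (simp add: f_def algebra_simps)
      ultimately show False by simp
    qed
    then obtain c where fc: "f c \<noteq> 0" by auto
    define A :: mat2 where "A = (\<chi> i j. M$i$j + (if i = j then c else 0))"
    have dA: "det A = f c" by (simp add: A_def det_2 f_def p_def q_def r_def s_def)
    have cA: "A ** M = M ** A" by (simp add: mat2_eq mult2 A_def algebra_simps)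
    have xA: "A ** X = X ** A" unfolding X_def
      by (rule comm_of_compat[OF F _ cA]) (simp add: invertible_det_nz dA fc)
    have a11: "(A**X)$1$1 = (X**A)$1$1" and a12: "(A**X)$1$2 = (X**A)$1$2"
      and a21: "(A**X)$2$1 = (X**A)$2$1" using xA by auto
    have b11: "(p+c)*X$1$1 + q*X$2$1 = X$1$1*(p+c) + X$1$2*r"
      using a11 unfolding mult2 A_def p_def q_def r_def by simp
    have b12: "(p+c)*X$1$2 + q*X$2$2 = X$1$1*q + X$1$2*(s+c)"
      using a12 unfolding mult2 A_def p_def q_def s_def by simp
    have b21: "r*X$1$1 + (s+c)*X$2$1 = X$2$1*(p+c) + X$2$2*r"
      using a21 unfolding mult2 A_def p_def r_def s_def by simp
    have E1: "X$1$2 * r = q * X$2$1" using b11 by (simp add: algebra_simps)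
    have E2: "q * (X$1$1 - X$2$2) = X$1$2 * (p - s)" using b12
      by (simp add: algebra_simps)
    have E3: "X$2$1 * (p - s) = r * (X$1$1 - X$2$2)" using b21
      by (simp add: algebra_simps)
    have "(X$1$1 - X$2$2)^2 + 4 * X$1$2 * X$2$1 = 0"
      using alg[OF E1 E2 E3 H] False by auto
    thus ?thesis unfolding X_def[symmetric]
      by (simp add: discriminant_hypersurface_def det_2 tr2_def algebra_simps power2_eq_square)
  qed
qed

theorem proposition2p25:
  fixes \<Phi> :: "mat2 \<Rightarrow> mat2"
  assumes "poly_automorphism_mat2 \<Phi>"
    and "compatible_with_conjugation \<Phi>"
  shows "\<Phi> ` discriminant_hypersurface = discriminant_hypersurface \<and>
         (\<forall>SqPhi :: complex \<times> complex \<Rightarrow> complex \<times> complex.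
           (\<forall>M. Inv (\<Phi> M) = SqPhi (Inv M)) \<longrightarrow>
           SqPhi ` discriminant_conic = discriminant_conic)"
proof -
  obtain G where GF: "\<And>M. G (\<Phi> M) = M" and FG: "\<And>M. \<Phi> (G M) = M"
    using assms(1) unfolding poly_automorphism_mat2_def by blast
  have cG: "compatible_with_conjugation G"
    unfolding compatible_with_conjugation_def
  proof (intro allI impI)
    fix A M assume A: "invertible (A::mat2)"
    have "\<Phi> (A ** G M ** matrix_inv A) = A ** M ** matrix_inv A"
      using assms(2) A FG unfolding compatible_with_conjugation_def by metis
    hence "G (\<Phi> (A ** G M ** matrix_inv A)) = G (A ** M ** matrix_inv A)" by simp
    thus "A ** G M ** matrix_inv A = G (A ** M ** matrix_inv A)" using GF by simp
  qed
  have P1: "\<Phi> ` discriminant_hypersurface = discriminant_hypersurface"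
  proof
    show "\<Phi> ` discriminant_hypersurface \<subseteq> discriminant_hypersurface"
      using disc_pres[OF assms(2)] by auto
    show "discriminant_hypersurface \<subseteq> \<Phi> ` discriminant_hypersurface"
    proof
      fix M assume "M \<in> discriminant_hypersurface"
      hence "G M \<in> discriminant_hypersurface" by (rule disc_pres[OF cG])
      thus "M \<in> \<Phi> ` discriminant_hypersurface" using FG by (metis image_eqI)
    qed
  qed
  have InvD: "Inv M \<in> discriminant_conic \<longleftrightarrow> M \<in> discriminant_hypersurface" for M
    by (auto simp: Inv_def discriminant_conic_def discriminant_hypersurface_def field_simps)
  define sc :: "complex \<Rightarrow> mat2" where "sc u = (\<chi> i j. if i = j then u/2 else 0)" for u
  have Isc: "Inv (sc u) = (u, u^2/4)" for u
    by (simp add: Inv_def sc_def tr2_def det_2 power2_eq_square)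
  have conic: "x \<in> discriminant_conic \<Longrightarrow> \<exists>u. x = (u, u^2/4)" for x
    by (auto simp: discriminant_conic_def)
  have P2: "SqPhi ` discriminant_conic = discriminant_conic"
    if S: "\<forall>M. Inv (\<Phi> M) = SqPhi (Inv M)" for SqPhi
  proof
    show "SqPhi ` discriminant_conic \<subseteq> discriminant_conic"
    proof
      fix y assume "y \<in> SqPhi ` discriminant_conic"
      then obtain x where x: "x \<in> discriminant_conic" "y = SqPhi x" by auto
      then obtain u where u: "x = Inv (sc u)" using conic Isc by metis
      have "sc u \<in> discriminant_hypersurface" using InvD x u by simp
      hence "\<Phi> (sc u) \<in> discriminant_hypersurface" using P1 by blast
      thus "y \<in> discriminant_conic" using InvD S x u by metis
    qed
    show "discriminant_conic \<subseteq> SqPhi ` discriminant_conic"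
    proof
      fix x assume x: "x \<in> discriminant_conic"
      then obtain u where u: "x = Inv (sc u)" using conic Isc by metis
      have "sc u \<in> discriminant_hypersurface" using InvD x u by simp
      hence g: "G (sc u) \<in> discriminant_hypersurface" using disc_pres[OF cG] by blast
      have "x = SqPhi (Inv (G (sc u)))" using S FG u by metis
      thus "x \<in> SqPhi ` discriminant_conic" using g InvD by blast
    qed
  qed
  show ?thesis using P1 P2 by blast
qed

end
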